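(* Let $G$ be a solvable group equipped with a purely positive length function, and let $A$ be a maximal abelian normal subgroup of $G$. Assume that $A$ is torsion-free. Then $C_{G}(A)=A$, where $C_G(A)$ is the centralizer of $A$ in $G$.
   Context: A length function on a group $G$ is a function $l:G\to[0,\infty)$ such that $l(g^{n})=|n|\,l(g)$ for all $g\in G,n\in\mathbb{Z}$; $l(hgh^{-1})=l(g)$ for all $g,h$; and $l(ab)\leq l(a)+l(b)$ whenever $a,b$ commute. It is purely positive if $l(g)>0$ for every element of infinite order. *)

theory Defs
  imports "HOL-Algebra.Algebra"
begin

definition length_function :: "('a, 'b) monoid_scheme \<Rightarrow> ('a \<Rightarrow> real) \<Rightarrow> bool" where
  "length_function G l \<longleftrightarrow>
     (\<forall>g\<in>carrier G. l g \<ge> 0) \<and>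
     (\<forall>g\<in>carrier G. \<forall>n::int. l (g [^]\<^bsub>G\<^esub> n) = \<bar>real_of_int n\<bar> * l g) \<and>
     (\<forall>g\<in>carrier G. \<forall>h\<in>carrier G. l (h \<otimes>\<^bsub>G\<^esub> g \<otimes>\<^bsub>G\<^esub> inv\<^bsub>G\<^esub> h) = l g) \<and>
     (\<forall>a\<in>carrier G. \<forall>b\<in>carrier G. a \<otimes>\<^bsub>G\<^esub> b = b \<otimes>\<^bsub>G\<^esub> a \<longrightarrow>
          l (a \<otimes>\<^bsub>G\<^esub> b) \<le> l a + l b)"

definition infinite_order :: "('a, 'b) monoid_scheme \<Rightarrow> 'a \<Rightarrow> bool" where
  "infinite_order G g \<longleftrightarrow> (\<forall>n::nat. n > 0 \<longrightarrow> g [^]\<^bsub>G\<^esub> n \<noteq> \<one>\<^bsub>G\<^esub>)"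

definition purely_positive :: "('a, 'b) monoid_scheme \<Rightarrow> ('a \<Rightarrow> real) \<Rightarrow> bool" where
  "purely_positive G l \<longleftrightarrow> (\<forall>g\<in>carrier G. infinite_order G g \<longrightarrow> l g > 0)"

definition torsion_free_subset :: "('a, 'b) monoid_scheme \<Rightarrow> 'a set \<Rightarrow> bool" where
  "torsion_free_subset G A \<longleftrightarrow> (\<forall>a\<in>A. a \<noteq> \<one>\<^bsub>G\<^esub> \<longrightarrow> infinite_order G a)"

definition abelian_normal_subgroup :: "('a, 'b) monoid_scheme \<Rightarrow> 'a set \<Rightarrow> bool" where
  "abelian_normal_subgroup G A \<longleftrightarrow> A \<lhd> G \<and> comm_group (G\<lparr>carrier := A\<rparr>)"

definition maximal_abelian_normal_subgroup :: "('a, 'b) monoid_scheme \<Rightarrow> 'a set \<Rightarrow> bool" where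
  "maximal_abelian_normal_subgroup G A \<longleftrightarrow> abelian_normal_subgroup G A \<and>
     (\<forall>B. abelian_normal_subgroup G B \<and> A \<subseteq> B \<longrightarrow> B = A)"

definition centralizer :: "('a, 'b) monoid_scheme \<Rightarrow> 'a set \<Rightarrow> 'a set" where
  "centralizer G A = {g \<in> carrier G. \<forall>a\<in>A. g \<otimes>\<^bsub>G\<^esub> a = a \<otimes>\<^bsub>G\<^esub> g}"

end

theory Submission
  imports Defs
begin

lemma (in group) pow_comm:
  assumes x: "x \<in> carrier G" and c: "c \<in> carrier G"
    and cx: "c \<otimes> x = x \<otimes> c"
  shows "c [^] (m::nat) \<otimes> x = x \<otimes> c [^] m"
proof (induction m)
  case 0
  then show ?case using x by simp
next
  case (Suc m)
  have "c [^] Suc m \<otimes> x = c [^] m \<otimes> (c \<otimes> x)" using x c by (simp add: m_assoc)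
  also have "\<dots> = (c [^] m \<otimes> x) \<otimes> c" using x c cx by (simp add: m_assoc)
  also have "\<dots> = x \<otimes> (c [^] m \<otimes> c)" using x c Suc by (simp add: m_assoc)
  finally show ?case by simp
qed

lemma (in group) conj_pow_comm:
  assumes x: "x \<in> carrier G" and y: "y \<in> carrier G" and c: "c \<in> carrier G"
    and cx: "c \<otimes> x = x \<otimes> c"
    and xy: "x \<otimes> y \<otimes> inv x = c \<otimes> y"
  shows "x [^] (m::nat) \<otimes> y \<otimes> inv (x [^] m) = c [^] m \<otimes> y"
proof (induction m)
  case 0
  then show ?case using y by simp
next
  case (Suc m)
  have cm: "c [^] m \<otimes> x = x \<otimes> c [^] m"
    by (rule pow_comm[OF x c cx])
  have e1: "x [^] Suc m = x \<otimes> x [^] m" using x by (rule nat_pow_Suc2)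
  have e2: "c [^] Suc m = c [^] m \<otimes> c" by simp
  have "x [^] Suc m \<otimes> y \<otimes> inv (x [^] Suc m) = x \<otimes> x [^] m \<otimes> y \<otimes> (inv (x [^] m) \<otimes> inv x)"
    unfolding e1 using x by (simp add: inv_mult_group)
  also have "\<dots> = x \<otimes> (x [^] m \<otimes> y \<otimes> inv (x [^] m)) \<otimes> inv x"
    using x y by (simp add: m_assoc)
  also have "\<dots> = x \<otimes> (c [^] m \<otimes> y) \<otimes> inv x" using Suc by simp
  also have "\<dots> = (x \<otimes> c [^] m) \<otimes> y \<otimes> inv x" using x y c by (simp add: m_assoc)
  also have "\<dots> = c [^] m \<otimes> (x \<otimes> y \<otimes> inv x)" using x y c by (simp add: cm[symmetric] m_assoc)
  also have "\<dots> = c [^] m \<otimes> (c \<otimes> y)" using xy by simp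
  also have "\<dots> = c [^] Suc m \<otimes> y" using c y e2 by (metis m_assoc nat_pow_closed)
  finally show ?case .
qed

lemma (in group) commutator_length_zero:
  assumes lf: "length_function G l"
    and x: "x \<in> carrier G" and y: "y \<in> carrier G" and c: "c \<in> carrier G"
    and cx: "c \<otimes> x = x \<otimes> c" and cy: "c \<otimes> y = y \<otimes> c"
    and xy: "x \<otimes> y \<otimes> inv x = c \<otimes> y"
  shows "l c = 0"
proof -
  have nonneg: "\<And>g. g \<in> carrier G \<Longrightarrow> l g \<ge> 0"
   and pw: "\<And>g n. g \<in> carrier G \<Longrightarrow> l (g [^] (n::int)) = \<bar>real_of_int n\<bar> * l g"
   and cj: "\<And>g h. g \<in> carrier G \<Longrightarrow> h \<in> carrier G \<Longrightarrow> l (h \<otimes> g \<otimes> inv h) = l g"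
   and sa: "\<And>a b. a \<in> carrier G \<Longrightarrow> b \<in> carrier G \<Longrightarrow> a \<otimes> b = b \<otimes> a \<Longrightarrow> l (a \<otimes> b) \<le> l a + l b"
    using lf unfolding length_function_def by auto
  have linv: "l (inv y) = l y"
  proof -
    have "y [^] (- int 1) = inv y" using y int_pow_neg_int[OF y, of 1] by simp
    then have "l (inv y) = l (y [^] (- int 1))" by simp
    also have "\<dots> = l y" using pw[OF y, of "- int 1"] by simp
    finally show ?thesis .
  qed
  have bound: "real m * l c \<le> 2 * l y" for m :: nat
  proof -
    have cm: "c [^] m \<in> carrier G" using c by simp
    have cmy: "c [^] m \<otimes> y = y \<otimes> c [^] m" using pow_comm[OF y c cy] .
    have "l (c [^] m) = l (c [^] (int m))" by (simp add: int_pow_int)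
    also have "\<dots> = real m * l c" using pw[OF c, of "int m"] by simp
    finally have e1: "l (c [^] m) = real m * l c" .
    have e2: "c [^] m = (c [^] m \<otimes> y) \<otimes> inv y" using cm y by (simp add: m_assoc)
    have comm: "(c [^] m \<otimes> y) \<otimes> inv y = inv y \<otimes> (c [^] m \<otimes> y)"
    proof -
      have "(c [^] m \<otimes> y) \<otimes> inv y = c [^] m" using cm y by (simp add: m_assoc)
      moreover have "inv y \<otimes> (y \<otimes> c [^] m) = c [^] m" using cm y by (simp add: m_assoc[symmetric])
      ultimately show ?thesis using cmy by simp
    qed
    have "l (c [^] m) \<le> l (c [^] m \<otimes> y) + l (inv y)"
      using sa[OF _ _ comm] cm y e2 by (metis m_closed inv_closed)
    also have "l (c [^] m \<otimes> y) = l y"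
      using conj_pow_comm[OF x y c cx xy, of m] cj[OF y, of "x [^] m"] x by simp
    finally show ?thesis using e1 linv by simp
  qed
  show ?thesis
  proof (rule ccontr)
    assume "l c \<noteq> 0"
    then have pos: "l c > 0" using nonneg[OF c] by simp
    obtain m :: nat where m: "2 * l y / l c < real m" using reals_Archimedean2 by blast
    then have "2 * l y < real m * l c" using pos by (simp add: field_simps)
    with bound[of m] show False by simp
  qed
qed

lemma step_exists:
  assumes "P (0::nat)" "\<not> P N"
  shows "\<exists>k. P k \<and> \<not> P (Suc k)"
  using assms by (induction N) auto

lemma (in group) derived_pow_normal:
  "(derived G ^^ n) (carrier G) \<lhd> G"
  by (induction n) (auto intro: derived_is_normal normal_self)

lemma (in group) lemma16_aux:
  assumes "True" and "solvable G"
    and "length_function G l" and "purely_positive G l"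
    and "maximal_abelian_normal_subgroup G A"
    and "torsion_free_subset G A"
  shows "centralizer G A = A"
proof -
  have nA: "A \<lhd> G" and cgA: "comm_group (G\<lparr>carrier := A\<rparr>)"
    and maxA: "\<And>B. abelian_normal_subgroup G B \<Longrightarrow> A \<subseteq> B \<Longrightarrow> B = A"
    using assms(5) unfolding maximal_abelian_normal_subgroup_def abelian_normal_subgroup_def by auto
  interpret nA: normal A G by (rule nA)
  have Asub: "A \<subseteq> carrier G" by (rule nA.subset)
  have abA: "a \<otimes> b = b \<otimes> a" if "a \<in> A" "b \<in> A" for a b
  proof -
    interpret cA: comm_group "G\<lparr>carrier := A\<rparr>" by (rule cgA)
    show ?thesis using cA.m_comm[of a b] that by simp
  qed
  define C where "C = centralizer G A"
  have Cdef: "g \<in> C \<longleftrightarrow> g \<in> carrier G \<and> (\<forall>a\<in>A. g \<otimes> a = a \<otimes> g)" for g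
    unfolding C_def centralizer_def by simp
  have AC: "A \<subseteq> C" using abA Asub Cdef by blast
  have sC: "subgroup C G"
  proof (rule subgroupI)
    show "C \<subseteq> carrier G" using Cdef by blast
    show "C \<noteq> {}" using Cdef Asub by (metis empty_iff one_closed r_one l_one subsetD)
    show "inv g \<in> C" if g: "g \<in> C" for g
    proof -
      have gc: "g \<in> carrier G" using g Cdef by blast
      have "inv g \<otimes> a = a \<otimes> inv g" if a: "a \<in> A" for a
      proof -
        have ac: "a \<in> carrier G" using a Asub by blast
        have ga: "g \<otimes> a = a \<otimes> g" using g a Cdef by blast
        have "inv g \<otimes> a = inv g \<otimes> (a \<otimes> g) \<otimes> inv g" using gc ac by (simp add: m_assoc)
        also have "\<dots> = inv g \<otimes> (g \<otimes> a) \<otimes> inv g" using ga by simp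
        also have "\<dots> = a \<otimes> inv g" using gc ac by (simp add: m_assoc[symmetric])
        finally show ?thesis .
      qed
      then show ?thesis using gc Cdef by simp
    qed
    show "g \<otimes> h \<in> C" if g: "g \<in> C" and h: "h \<in> C" for g h
    proof -
      have gc: "g \<in> carrier G" and hc: "h \<in> carrier G" using g h Cdef by auto
      have "g \<otimes> h \<otimes> a = a \<otimes> (g \<otimes> h)" if a: "a \<in> A" for a
      proof -
        have ac: "a \<in> carrier G" using a Asub by blast
        have "g \<otimes> h \<otimes> a = g \<otimes> (h \<otimes> a)" using gc hc ac by (simp add: m_assoc)
        also have "\<dots> = g \<otimes> (a \<otimes> h)" using h a Cdef by simp
        also have "\<dots> = (g \<otimes> a) \<otimes> h" using gc hc ac by (simp add: m_assoc)
        also have "\<dots> = (a \<otimes> g) \<otimes> h" using g a Cdef by simp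
        finally show ?thesis using gc hc ac by (simp add: m_assoc)
      qed
      then show ?thesis using gc hc Cdef by simp
    qed
  qed
  have conjC: "x \<otimes> g \<otimes> inv x \<in> C" if x: "x \<in> carrier G" and g: "g \<in> C" for x g
  proof -
    have gc: "g \<in> carrier G" using g Cdef by blast
    have "x \<otimes> g \<otimes> inv x \<otimes> a = a \<otimes> (x \<otimes> g \<otimes> inv x)" if a: "a \<in> A" for a
    proof -
      have ac: "a \<in> carrier G" using a Asub by blast
      define a' where "a' = inv x \<otimes> a \<otimes> x"
      have a'A: "a' \<in> A" unfolding a'_def using nA.inv_op_closed1[OF x a] .
      have a'c: "a' \<in> carrier G" using a'A Asub by blast
      have xa: "a \<otimes> x = x \<otimes> a'" unfolding a'_def using x ac by (simp add: m_assoc[symmetric])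
      have xa2: "inv x \<otimes> a = a' \<otimes> inv x" unfolding a'_def using x ac by (simp add: m_assoc)
      have "x \<otimes> g \<otimes> inv x \<otimes> a = x \<otimes> g \<otimes> (inv x \<otimes> a)" using x gc ac by (simp add: m_assoc)
      also have "\<dots> = x \<otimes> (g \<otimes> a') \<otimes> inv x" using x gc a'c by (simp add: xa2 m_assoc)
      also have "\<dots> = x \<otimes> (a' \<otimes> g) \<otimes> inv x" using g a'A Cdef by simp
      also have "\<dots> = (x \<otimes> a') \<otimes> g \<otimes> inv x" using x gc a'c by (simp add: m_assoc)
      also have "\<dots> = a \<otimes> (x \<otimes> g \<otimes> inv x)" using x gc ac by (simp add: xa[symmetric] m_assoc)
      finally show ?thesis .
    qed
    then show ?thesis using x gc Cdef by simp
  qed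
  show ?thesis
  proof (rule ccontr)
    assume ne: "centralizer G A \<noteq> A"
    then have CnA: "\<not> C \<subseteq> A" using AC C_def by blast
    define Dk where "Dk n = (derived G ^^ n) (carrier G)" for n
    obtain N where N: "Dk N = {\<one>}"
      using assms(2) solvable_iff_trivial_derived_seq Dk_def by auto
    have "\<exists>k. \<not> (Dk k \<inter> C \<subseteq> A) \<and> \<not> \<not> (Dk (Suc k) \<inter> C \<subseteq> A)"
      by (rule step_exists[of "\<lambda>n. \<not> (Dk n \<inter> C \<subseteq> A)" N])
        (use CnA sC N nA.one_closed in \<open>auto simp: Dk_def dest: subgroup.subset\<close>)
    then obtain k where k1: "\<not> (Dk k \<inter> C \<subseteq> A)" and k2: "Dk (Suc k) \<inter> C \<subseteq> A" by blast
    define H where "H = Dk k \<inter> C"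
    interpret nD: normal "Dk k" G unfolding Dk_def by (rule derived_pow_normal)
    have Hc: "h \<in> H \<Longrightarrow> h \<in> carrier G" for h using H_def Cdef by blast
    have HC: "h \<in> H \<Longrightarrow> a \<in> A \<Longrightarrow> h \<otimes> a = a \<otimes> h" for h a using H_def Cdef by blast
    have Hinv: "h \<in> H \<Longrightarrow> inv h \<in> H" for h
      using H_def sC subgroup.m_inv_closed nD.m_inv_closed by auto
    have Hmult: "h \<in> H \<Longrightarrow> g \<in> H \<Longrightarrow> h \<otimes> g \<in> H" for h g
      using H_def sC subgroup.m_closed nD.m_closed by auto
    have Hone: "\<one> \<in> H" using H_def sC subgroup.one_closed nD.one_closed by auto
    have Hconj: "x \<in> carrier G \<Longrightarrow> h \<in> H \<Longrightarrow> x \<otimes> h \<otimes> inv x \<in> H" for x h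
      using H_def conjC nD.inv_op_closed2 by auto
    have Hab: "x \<otimes> y = y \<otimes> x" if x: "x \<in> H" and y: "y \<in> H" for x y
    proof -
      have xc: "x \<in> carrier G" and yc: "y \<in> carrier G" using x y Hc by auto
      define c where "c = x \<otimes> y \<otimes> inv x \<otimes> inv y"
      have cc: "c \<in> carrier G" unfolding c_def using xc yc by simp
      have "c \<in> derived_set G (Dk k)" unfolding c_def using x y H_def by blast
      then have "c \<in> Dk (Suc k)" unfolding Dk_def derived_def by (simp add: generate.incl)
      moreover have "c \<in> C" unfolding c_def using x y H_def sC
        by (meson IntD2 subgroup.m_closed subgroup.m_inv_closed)
      ultimately have cA: "c \<in> A" using k2 by blast
      have cx: "c \<otimes> x = x \<otimes> c" using HC[OF x cA] by simp
      have cy: "c \<otimes> y = y \<otimes> c" using HC[OF y cA] by simp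
      have xy: "x \<otimes> y \<otimes> inv x = c \<otimes> y" unfolding c_def using xc yc by (simp add: m_assoc)
      have "l c = 0"
        by (rule commutator_length_zero[OF assms(3) xc yc cc cx cy xy])
      have c1: "c = \<one>"
      proof (rule ccontr)
        assume "c \<noteq> \<one>"
        then have "infinite_order G c" using assms(6) cA unfolding torsion_free_subset_def by blast
        then have "l c > 0" using assms(4) cc unfolding purely_positive_def by blast
        with \<open>l c = 0\<close> show False by simp
      qed
      then have "x \<otimes> y \<otimes> inv x = y" using xy yc by simp
      then have "x \<otimes> y \<otimes> inv x \<otimes> x = y \<otimes> x" by simp
      then show ?thesis using xc yc by (simp add: m_assoc)
    qed
    define D where "D = {a \<otimes> h | a h. a \<in> A \<and> h \<in> H}"
    have Dc: "D \<subseteq> carrier G" unfolding D_def using Asub Hc by blast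
    have Dmult: "(a1 \<otimes> h1) \<otimes> (a2 \<otimes> h2) = (a1 \<otimes> a2) \<otimes> (h1 \<otimes> h2)"
      if "a1 \<in> A" "a2 \<in> A" "h1 \<in> H" "h2 \<in> H" for a1 a2 h1 h2
    proof -
      have c: "a1 \<in> carrier G" "a2 \<in> carrier G" "h1 \<in> carrier G" "h2 \<in> carrier G"
        using that Asub Hc by auto
      have "(a1 \<otimes> h1) \<otimes> (a2 \<otimes> h2) = a1 \<otimes> (h1 \<otimes> a2) \<otimes> h2" using c by (simp add: m_assoc)
      also have "\<dots> = a1 \<otimes> (a2 \<otimes> h1) \<otimes> h2" using HC that by simp
      finally show ?thesis using c by (simp add: m_assoc)
    qed
    have sD: "subgroup D G"
    proof (rule subgroupI)
      show "D \<subseteq> carrier G" by (rule Dc)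
      show "D \<noteq> {}" unfolding D_def using Hone nA.one_closed by blast
      show "inv g \<in> D" if "g \<in> D" for g
      proof -
        obtain a h where g: "g = a \<otimes> h" and a: "a \<in> A" and h: "h \<in> H" using \<open>g \<in> D\<close> D_def by blast
        have ac: "a \<in> carrier G" and hc: "h \<in> carrier G" using a h Asub Hc by auto
        have "inv g = inv h \<otimes> inv a" using g ac hc by (simp add: inv_mult_group)
        also have "\<dots> = inv a \<otimes> inv h" using HC[OF Hinv[OF h] nA.m_inv_closed[OF a]] .
        finally show ?thesis unfolding D_def using Hinv[OF h] nA.m_inv_closed[OF a] by blast
      qed
      show "g \<otimes> g' \<in> D" if "g \<in> D" "g' \<in> D" for g g'
      proof -
        obtain a h where g: "g = a \<otimes> h" and a: "a \<in> A" and h: "h \<in> H" using \<open>g \<in> D\<close> D_def by blast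
        obtain a' h' where g': "g' = a' \<otimes> h'" and a': "a' \<in> A" and h': "h' \<in> H" using \<open>g' \<in> D\<close> D_def by blast
        have "g \<otimes> g' = (a \<otimes> a') \<otimes> (h \<otimes> h')" using g g' Dmult a a' h h' by simp
        then show ?thesis unfolding D_def using nA.m_closed[OF a a'] Hmult[OF h h'] by blast
      qed
    qed
    have nD: "D \<lhd> G"
      unfolding normal_inv_iff
    proof (intro conjI ballI)
      show "subgroup D G" by (rule sD)
      fix x g assume x: "x \<in> carrier G" and "g \<in> D"
      then obtain a h where g: "g = a \<otimes> h" and a: "a \<in> A" and h: "h \<in> H" using D_def by blast
      have ac: "a \<in> carrier G" and hc: "h \<in> carrier G" using a h Asub Hc by auto
      have "(x \<otimes> a \<otimes> inv x) \<otimes> (x \<otimes> h \<otimes> inv x) = x \<otimes> a \<otimes> (inv x \<otimes> x) \<otimes> h \<otimes> inv x"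
      proof -
        have canc: "inv x \<otimes> (x \<otimes> y) = y" if "y \<in> carrier G" for y
          using x that by (simp add: m_assoc[symmetric])
        show ?thesis using x ac hc by (simp add: m_assoc canc)
      qed
      also have "\<dots> = x \<otimes> g \<otimes> inv x" using g x ac hc by (simp add: m_assoc)
      finally have "x \<otimes> g \<otimes> inv x = (x \<otimes> a \<otimes> inv x) \<otimes> (x \<otimes> h \<otimes> inv x)" by simp
      then show "x \<otimes> g \<otimes> inv x \<in> D"
        unfolding D_def using nA.inv_op_closed2[OF x a] Hconj[OF x h] by blast
    qed
    have cD: "comm_group (G\<lparr>carrier := D\<rparr>)"
    proof (rule group.group_comm_groupI)
      show "group (G\<lparr>carrier := D\<rparr>)" by (rule subgroup.subgroup_is_group[OF sD is_group])
      fix g g' assume "g \<in> carrier (G\<lparr>carrier := D\<rparr>)" "g' \<in> carrier (G\<lparr>carrier := D\<rparr>)"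
      then have "g \<in> D" "g' \<in> D" by auto
      then obtain a h a' h' where g: "g = a \<otimes> h" and a: "a \<in> A" and h: "h \<in> H"
        and g': "g' = a' \<otimes> h'" and a': "a' \<in> A" and h': "h' \<in> H" using D_def by blast
      have "g \<otimes> g' = (a \<otimes> a') \<otimes> (h \<otimes> h')" using g g' Dmult a a' h h' by simp
      also have "\<dots> = (a' \<otimes> a) \<otimes> (h' \<otimes> h)" using abA[OF a a'] Hab[OF h h'] by simp
      also have "\<dots> = g' \<otimes> g" using g g' Dmult a a' h h' by simp
      finally show "g \<otimes>\<^bsub>G\<lparr>carrier := D\<rparr>\<^esub> g' = g' \<otimes>\<^bsub>G\<lparr>carrier := D\<rparr>\<^esub> g" by simp
    qed
    have AD: "A \<subseteq> D"
    proof
      fix a assume a: "a \<in> A"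
      then have "a = a \<otimes> \<one>" using Asub by auto
      then show "a \<in> D" unfolding D_def using a Hone by blast
    qed
    obtain h where h: "h \<in> H" "h \<notin> A" using k1 H_def by blast
    have "h = \<one> \<otimes> h" using Hc[OF h(1)] by simp
    then have "h \<in> D" unfolding D_def using h(1) nA.one_closed by blast
    moreover have "D = A" by (rule maxA) (use nD cD AD in \<open>auto simp: abelian_normal_subgroup_def\<close>)
    ultimately show False using h(2) by simp
  qed
qed

theorem lemma16:
  fixes G :: "('a, 'b) monoid_scheme" and l :: "'a \<Rightarrow> real" and A :: "'a set"
  assumes "group G" and "solvable G"
    and "length_function G l" and "purely_positive G l"
    and "maximal_abelian_normal_subgroup G A"
    and "torsion_free_subset G A"
  shows "centralizer G A = A"
  using group.lemma16_aux[OF assms(1) TrueI assms(2-6)] .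

end
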